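(* If $f\in{\rm elh}(\mathbb{C})$ is a polynomial, then the map $L_f:{\rm elh}(\mathbb{C})\to{\rm elh}(\mathbb{C})$, $L_f(g)=f\circ g$, is injective.
   Context: ${\rm elh}(\mathbb{C})$ denotes the set of entire functions with nowhere vanishing derivative and derivative $1$ at $0$. *)

theory Defs
  imports "HOL-Complex_Analysis.Complex_Analysis" "HOL-Computational_Algebra.Polynomial"
begin

definition elh :: "(complex \<Rightarrow> complex) set" where
  "elh = {f. f holomorphic_on UNIV \<and> (\<forall>z. deriv f z \<noteq> 0) \<and> deriv f 0 = 1}"

end

theory Submission
  imports Defs "HOL-Computational_Algebra.Fundamental_Theorem_Algebra"
begin

lemma elh_poly_shift:
  assumes "f \<in> elh" and "f = poly p"
  shows "f = (\<lambda>z. z + f 0)"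
proof -
  have d: "\<And>z. deriv f z = poly (pderiv p) z"
    using assms(2) DERIV_imp_deriv[OF poly_DERIV] by simp
  have e: "\<forall>z. deriv f z \<noteq> 0" "deriv f 0 = 1" using assms(1) unfolding elh_def by blast+
  have nz: "poly (pderiv p) z \<noteq> 0" for z
  proof -
    have "deriv f z \<noteq> 0" using e(1) by blast
    then show ?thesis by (simp add: d)
  qed
  have c: "constant (poly (pderiv p))"
  proof (rule ccontr)
    assume "\<not> constant (poly (pderiv p))"
    from Fundamental_Theorem_Algebra.fundamental_theorem_of_algebra[OF this] obtain z where "poly (pderiv p) z = 0" by blast
    with nz[of z] show False by simp
  qed
  have d0: "poly (pderiv p) 0 = 1" using e(2) by (simp add: d)
  have one: "poly (pderiv p) z = 1" for z
    using c d0 unfolding constant_def by (metis (no_types))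
  have "\<And>z. ((\<lambda>z. f z - z) has_field_derivative 0) (at z within UNIV)"
  proof -
    fix z
    have "(f has_field_derivative 1) (at z)" using poly_DERIV[of p z] one[of z] assms(2) by simp
    then show "((\<lambda>z. f z - z) has_field_derivative 0) (at z within UNIV)"
      by (auto intro!: derivative_eq_intros)
  qed
  then obtain k where k: "\<forall>x\<in>UNIV. f x - x = k"
    using has_field_derivative_zero_constant[OF convex_UNIV, of "\<lambda>z. f z - z"] by blast
  have k0: "k = f 0" using k by (metis UNIV_I diff_zero)
  have "f z = z + f 0" for z using k k0 by (metis UNIV_I diff_eq_eq add.commute)
  then show ?thesis by (rule ext)
qed

theorem proposition3p21:
  fixes f :: "complex \<Rightarrow> complex"
  assumes "f \<in> elh"
    and "\<exists>p :: complex poly. f = poly p"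
  shows "(\<lambda>g. f \<circ> g) ` elh \<subseteq> elh \<and> inj_on (\<lambda>g. f \<circ> g) elh"
proof -
  obtain p where "f = poly p" using assms(2) by blast
  then have fe: "f = (\<lambda>z. z + f 0)" using elh_poly_shift assms(1) by blast
  define c where "c = f 0"
  have comp: "\<And>g. f \<circ> g = (\<lambda>z. g z + c)" unfolding c_def by (subst fe) (auto simp: o_def)
  have "(\<lambda>z. g z + c) \<in> elh" if g: "g \<in> elh" for g
  proof -
    have hg: "g holomorphic_on UNIV" using g by (simp add: elh_def)
    have "\<And>z. deriv (\<lambda>z. g z + c) z = deriv g z"
    proof -
      fix z
      have "g field_differentiable at z" using hg holomorphic_on_imp_differentiable_at by blast
      then have "(g has_field_derivative deriv g z) (at z)"
        using DERIV_deriv_iff_field_differentiable by blast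
      then have "((\<lambda>z. g z + c) has_field_derivative deriv g z) (at z)"
        by (auto intro!: derivative_eq_intros)
      then show "deriv (\<lambda>z. g z + c) z = deriv g z" by (rule DERIV_imp_deriv)
    qed
    moreover have "(\<lambda>z. g z + c) holomorphic_on UNIV"
      using hg by (intro holomorphic_intros) auto
    ultimately show ?thesis using g by (simp add: elh_def)
  qed
  moreover have "inj_on (\<lambda>g. f \<circ> g) elh"
  proof (rule inj_onI)
    fix g h :: "complex \<Rightarrow> complex" assume "f \<circ> g = f \<circ> h"
    then have "(\<lambda>z. g z + c) = (\<lambda>z. h z + c)" by (simp add: comp)
    then show "g = h" by (simp add: fun_eq_iff)
  qed
  ultimately show ?thesis by (auto simp: comp)
qed

end
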